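(* Let $G=(V,E)$ be a nice graph and $J$ a good subset of $V$. Then there exists a $J$-covering family $\mathcal{C}$ such that $K_{\mathcal{C}}(e)\le5$ for all $e\in E\setminus E_{J,1}$ and $K_{\mathcal{C}}(e)=0$ for all $e\in E_{J,1}$.
   Context: All graphs are finite and simple. An edge is isolated if both its ends have degree $1$; a graph is nice if it has no isolated edges. For $J\subseteq V$: $E_{J,1}$ is the set of non-isolated edges of $G-J$; $E_{J,2}$ the isolated edges of $G-J$; $E_{J,3}$ the edges with exactly one end in $J$; $E_{J,4}$ the edges with both ends in $J$; $G_{J,3}=(V,E_{J,3})$, $G_{J,4}=(J,E_{J,4})$; $d_{G_{J,3}}(j)$ is the number of edges of $E_{J,3}$ at $j$. For $i\in V\setminus J$, if $N_{G_{J,3}}(i)=\{j\}$ then $i$ is a private neighbour of $j$. A set $J\subseteq V$ is a good subset if $J\ne\emptyset$ and: (J1) $G_{J,4}$ has maximum degree at most $1$; (J2) $G_{J,3}$ has no isolated edges; (J3) each $j\in J$ has at most one private neighbour; (J4) for each $e=\{j,j'\}\in E_{J,4}$ there is $i_e\in V\setminus J$ with $\{j,j'\}\subseteq N_{G_{J,3}}(i_e)$, neither $j$ nor $j'$ has a private neighbour, and $i_e\ne i_{e'}$ for distinct $e,e'\in E_{J,4}$; (J5) for every $e\in E_{J,2}$, each end vertex of $e$ has a neighbour in $J$. A subgraph family is a multiset of subgraphs of $G$. An $E_{J,2}$-covering family is a family $\{C_e:e\in E_{J,2}\}$ where each $C_e$ is an edge of $E_{J,3}$ sharing an end vertex with $e$.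 An $E_{J,3}$-covering family is a family $\mathcal{C}_{J,3}$ of paths in $G$, each with two distinct end vertices both in $J$, such that (i) for each pair of distinct $j,j'\in J$ the number of even-length paths in the family joining $j,j'$ is even and the number of odd-length ones is even; (ii) for each $j\in J$, $d_{\mathcal{C}_{J,3}}(j)\ge2d_{G_{J,3}}(j)$, where $d_{\mathcal{C}_{J,3}}(j)$ is the number of paths (with multiplicity) with end vertex $j$. An $E_{J,4}$-covering family is a family $\{C_e:e\in E_{J,4}\}$ where each $C_e$ is an odd-length closed walk containing $e$. A $J$-covering family is a union $\mathcal{C}=\mathcal{C}_{J,2}\cup\mathcal{C}_{J,3}\cup\mathcal{C}_{J,4}$ of an $E_{J,2}$-, $E_{J,3}$- and $E_{J,4}$-covering family. For a subgraph $H$, $K_H:E\to\{0,1\}$ is the indicator of $E(H)$; $K_{\mathcal{H}}=\sum_{H\in\mathcal{H}}K_H$ with multiplicity. *)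

theory Defs
  imports Main "HOL-Library.Multiset"
begin

definition simple_graph :: "'a set \<Rightarrow> 'a set set \<Rightarrow> bool" where
  "simple_graph V E \<longleftrightarrow> finite V \<and> (\<forall>e\<in>E. e \<subseteq> V \<and> card e = 2)"

definition deg :: "'a set set \<Rightarrow> 'a \<Rightarrow> nat" where
  "deg F v = card {e\<in>F. v \<in> e}"

definition isolated_edge :: "'a set set \<Rightarrow> 'a set \<Rightarrow> bool" where
  "isolated_edge F e \<longleftrightarrow> e \<in> F \<and> (\<forall>v\<in>e. deg F v = 1)"

definition nice :: "'a set \<Rightarrow> 'a set set \<Rightarrow> bool" where
  "nice V E \<longleftrightarrow> simple_graph V E \<and> (\<forall>e\<in>E. \<not> isolated_edge E e)"

definition edges_minus :: "'a set set \<Rightarrow> 'a set \<Rightarrow> 'a set set" where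
  "edges_minus E J = {e\<in>E. e \<inter> J = {}}"

definition EJ1 :: "'a set set \<Rightarrow> 'a set \<Rightarrow> 'a set set" where
  "EJ1 E J = {e\<in>edges_minus E J. \<not> isolated_edge (edges_minus E J) e}"

definition EJ2 :: "'a set set \<Rightarrow> 'a set \<Rightarrow> 'a set set" where
  "EJ2 E J = {e\<in>edges_minus E J. isolated_edge (edges_minus E J) e}"

definition EJ3 :: "'a set set \<Rightarrow> 'a set \<Rightarrow> 'a set set" where
  "EJ3 E J = {e\<in>E. card (e \<inter> J) = 1}"

definition EJ4 :: "'a set set \<Rightarrow> 'a set \<Rightarrow> 'a set set" where
  "EJ4 E J = {e\<in>E. e \<subseteq> J}"

definition NJ3 :: "'a set set \<Rightarrow> 'a set \<Rightarrow> 'a \<Rightarrow> 'a set" where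
  "NJ3 E J i = {j. {i, j} \<in> EJ3 E J}"

definition private_nb :: "'a set \<Rightarrow> 'a set set \<Rightarrow> 'a set \<Rightarrow> 'a \<Rightarrow> 'a \<Rightarrow> bool" where
  "private_nb V E J i j \<longleftrightarrow> i \<in> V - J \<and> NJ3 E J i = {j}"

definition good_subset :: "'a set \<Rightarrow> 'a set set \<Rightarrow> 'a set \<Rightarrow> bool" where
  "good_subset V E J \<longleftrightarrow>
     J \<subseteq> V \<and> J \<noteq> {} \<and>
     \<comment> \<open>(J1)\<close>
     (\<forall>j\<in>J. deg (EJ4 E J) j \<le> 1) \<and>
     \<comment> \<open>(J2)\<close>
     (\<forall>e\<in>EJ3 E J. \<not> isolated_edge (EJ3 E J) e) \<and>
     \<comment> \<open>(J3)\<close>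
     (\<forall>j\<in>J. card {i. private_nb V E J i j} \<le> 1) \<and>
     \<comment> \<open>(J4)\<close>
     (\<exists>ie. inj_on ie (EJ4 E J) \<and>
        (\<forall>e\<in>EJ4 E J. ie e \<in> V - J \<and> e \<subseteq> NJ3 E J (ie e)
            \<and> (\<forall>j\<in>e. \<not> (\<exists>i. private_nb V E J i j)))) \<and>
     \<comment> \<open>(J5)\<close>
     (\<forall>e\<in>EJ2 E J. \<forall>v\<in>e. \<exists>j\<in>J. {v, j} \<in> E)"

definition walk_edges :: "'a list \<Rightarrow> 'a set set" where
  "walk_edges w = {{a, b} | a b. (a, b) \<in> set (zip w (tl w))}"

definition walk_len :: "'a list \<Rightarrow> nat" where
  "walk_len w = length w - 1"

definition is_walk :: "'a set \<Rightarrow> 'a set set \<Rightarrow> 'a list \<Rightarrow> bool" where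
  "is_walk V E w \<longleftrightarrow> w \<noteq> [] \<and> set w \<subseteq> V \<and>
     (\<forall>i. Suc i < length w \<longrightarrow> {w ! i, w ! Suc i} \<in> E)"

definition is_path :: "'a set \<Rightarrow> 'a set set \<Rightarrow> 'a list \<Rightarrow> bool" where
  "is_path V E p \<longleftrightarrow> is_walk V E p \<and> distinct p"

definition odd_closed_walk :: "'a set \<Rightarrow> 'a set set \<Rightarrow> 'a list \<Rightarrow> bool" where
  "odd_closed_walk V E w \<longleftrightarrow> is_walk V E w \<and> hd w = last w \<and> odd (walk_len w)"

text \<open>E_{J,2}-covering family, indexed by E_{J,2}: C e is an edge (as a subgraph).\<close>
definition EJ2_covering :: "'a set set \<Rightarrow> 'a set \<Rightarrow> ('a set \<Rightarrow> 'a set) \<Rightarrow> bool" where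
  "EJ2_covering E J C \<longleftrightarrow> (\<forall>e\<in>EJ2 E J. C e \<in> EJ3 E J \<and> C e \<inter> e \<noteq> {})"

definition joins :: "'a list \<Rightarrow> 'a \<Rightarrow> 'a \<Rightarrow> bool" where
  "joins p j j' \<longleftrightarrow> {hd p, last p} = {j, j'}"

definition dC :: "'a list multiset \<Rightarrow> 'a \<Rightarrow> nat" where
  "dC C j = size (filter_mset (\<lambda>p. j = hd p \<or> j = last p) C)"

definition EJ3_covering :: "'a set \<Rightarrow> 'a set set \<Rightarrow> 'a set \<Rightarrow> 'a list multiset \<Rightarrow> bool" where
  "EJ3_covering V E J C \<longleftrightarrow>
     (\<forall>p\<in>#C. is_path V E p \<and> hd p \<noteq> last p \<and> hd p \<in> J \<and> last p \<in> J) \<and>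
     (\<forall>j\<in>J. \<forall>j'\<in>J. j \<noteq> j' \<longrightarrow>
        even (size (filter_mset (\<lambda>p. joins p j j' \<and> even (walk_len p)) C)) \<and>
        even (size (filter_mset (\<lambda>p. joins p j j' \<and> odd (walk_len p)) C))) \<and>
     (\<forall>j\<in>J. dC C j \<ge> 2 * deg (EJ3 E J) j)"

definition EJ4_covering :: "'a set \<Rightarrow> 'a set set \<Rightarrow> 'a set \<Rightarrow> ('a set \<Rightarrow> 'a list) \<Rightarrow> bool" where
  "EJ4_covering V E J C \<longleftrightarrow> (\<forall>e\<in>EJ4 E J. odd_closed_walk V E (C e) \<and> e \<in> walk_edges (C e))"

definition J_covering :: "'a set \<Rightarrow> 'a set set \<Rightarrow> 'a set \<Rightarrow>
    ('a set \<Rightarrow> 'a set) \<Rightarrow> 'a list multiset \<Rightarrow> ('a set \<Rightarrow> 'a list) \<Rightarrow> bool" where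
  "J_covering V E J C2 C3 C4 \<longleftrightarrow>
     EJ2_covering E J C2 \<and> EJ3_covering V E J C3 \<and> EJ4_covering V E J C4"

text \<open>K_C(f): number of members (with multiplicity) of the union family whose
  edge set contains f. Each member of C2 is a single edge, of C3 a path,
  of C4 a closed walk (its edge set).\<close>
definition K_cov :: "'a set set \<Rightarrow> 'a set \<Rightarrow>
    ('a set \<Rightarrow> 'a set) \<Rightarrow> 'a list multiset \<Rightarrow> ('a set \<Rightarrow> 'a list) \<Rightarrow> 'a set \<Rightarrow> nat" where
  "K_cov E J C2 C3 C4 f =
     card {e\<in>EJ2 E J. C2 e = f}
     + size (filter_mset (\<lambda>p. f \<in> walk_edges p) C3)
     + card {e\<in>EJ4 E J. f \<in> walk_edges (C4 e)}"

end

theory Submission imports Defs begin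


lemma filter_repeat: "filter_mset P (repeat_mset n M) = repeat_mset n (filter_mset P M)"
  by (induction n) auto

lemma filter_sum: "finite S \<Longrightarrow> filter_mset P (\<Sum>i\<in>S. f i) = (\<Sum>i\<in>S. filter_mset P (f i))"
  by (induction S rule: finite_induct) auto

lemma size_sum: "finite S \<Longrightarrow> size (\<Sum>i\<in>S. f i :: 'b multiset) = (\<Sum>i\<in>S. size (f i))"
  by (induction S rule: finite_induct) auto

lemma size_filter_map: "size (filter_mset P (mset (map f [0..<k]))) = card {t. t < k \<and> P (f t)}"
  unfolding mset_filter[symmetric] size_mset length_filter_conv_card
  by (rule arg_cong[where f=card]) auto

definition nx :: "nat \<Rightarrow> nat \<Rightarrow> nat" where
  "nx k t = (if Suc t = k then 0 else Suc t)"

lemma nx_lt: "t < k \<Longrightarrow> nx k t < k" by (auto simp: nx_def)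
lemma nx_inj: "t < k \<Longrightarrow> t' < k \<Longrightarrow> nx k t = nx k t' \<Longrightarrow> t = t'"
  by (auto simp: nx_def split: if_splits)
lemma nx_ne: "t < k \<Longrightarrow> 2 \<le> k \<Longrightarrow> nx k t \<noteq> t" by (auto simp: nx_def)

lemma cnt_le:
  assumes "distinct xs"
  shows "card {t. t < length xs \<and> (xs!t = j \<or> xs!nx (length xs) t = j)} \<le> 2"
proof -
  let ?k = "length xs"
  let ?A = "{t. t < ?k \<and> xs!t = j}" and ?B = "{t. t < ?k \<and> xs!nx ?k t = j}"
  have a: "card ?A \<le> Suc 0"
    using assms by (subst card_le_Suc0_iff_eq) (auto simp: nth_eq_iff_index_eq)
  have b: "card ?B \<le> Suc 0"
    using assms by (subst card_le_Suc0_iff_eq) (auto simp: nth_eq_iff_index_eq nx_lt intro: nx_inj)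
  have "{t. t < ?k \<and> (xs!t = j \<or> xs!nx ?k t = j)} = ?A \<union> ?B" by auto
  hence "card {t. t < ?k \<and> (xs!t = j \<or> xs!nx ?k t = j)} \<le> card ?A + card ?B"
    by (simp add: card_Un_le)
  thus ?thesis using a b by simp
qed

lemma cnt_ge:
  assumes "distinct xs" "j \<in> set xs" "2 \<le> length xs"
  shows "2 \<le> card {t. t < length xs \<and> (xs!t = j \<or> xs!nx (length xs) t = j)}"
proof -
  let ?k = "length xs"
  obtain p where p: "p < ?k" "xs!p = j" using assms(2) by (auto simp: in_set_conv_nth)
  define q where "q = (if p = 0 then ?k - 1 else p - 1)"
  have q: "q < ?k" "nx ?k q = p" "q \<noteq> p" using p assms(3) by (auto simp: q_def nx_def)
  have "{p, q} \<subseteq> {t. t < ?k \<and> (xs!t = j \<or> xs!nx ?k t = j)}" using p q by auto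
  moreover have "finite {t. t < ?k \<and> (xs!t = j \<or> xs!nx ?k t = j)}" by simp
  ultimately have "card {p,q} \<le> card {t. t < ?k \<and> (xs!t = j \<or> xs!nx ?k t = j)}"
    by (meson card_mono)
  thus ?thesis using q by simp
qed

lemma we3: "walk_edges [a,b,c] = {{a,b},{b,c}}"
  by (auto simp: walk_edges_def)
lemma we4: "walk_edges [a,b,c,d] = {{a,b},{b,c},{c,d}}"
  by (auto simp: walk_edges_def)



lemma sum_single_nz: "finite S \<Longrightarrow> i0 \<in> S \<Longrightarrow> (\<forall>i\<in>S. i \<noteq> i0 \<longrightarrow> g i = 0) \<Longrightarrow> sum g S = g i0"
  by (simp add: sum.remove sum.neutral)

lemma in_repeat: "x \<in># repeat_mset n M \<Longrightarrow> n \<noteq> 0 \<and> x \<in># M"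
  by (metis count_greater_zero_iff count_repeat_mset mult_is_0 neq0_conv)

locale LG =
  fixes V :: "'a set" and E :: "'a set set" and J :: "'a set" and ie :: "'a set \<Rightarrow> 'a"
  assumes nice: "nice V E" and good: "good_subset V E J"
  and ie_inj: "inj_on ie (EJ4 E J)"
  and ie_prop: "\<And>e. e \<in> EJ4 E J \<Longrightarrow> ie e \<in> V - J \<and> e \<subseteq> NJ3 E J (ie e) \<and> (\<forall>j\<in>e. \<not> (\<exists>i. private_nb V E J i j))"
begin

abbreviation N where "N i \<equiv> NJ3 E J i"
definition nbl where "nbl i = (SOME xs. set xs = N i \<and> distinct xs)"
definition kk where "kk i = length (nbl i)"
definition cyc where "cyc i t = [nbl i ! t, i, nbl i ! nx (kk i) t]"
definition cm :: "'a \<Rightarrow> nat" where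
  "cm i = (if kk i < 2 then 0 else if kk i = 2 \<and> (\<exists>e\<in>EJ4 E J. ie e = i) then 1 else 2)"
definition Q where "Q i = repeat_mset (cm i) (mset (map (cyc i) [0..<kk i]))"
definition C3 where "C3 = (\<Sum>i\<in>V-J. Q i)"

lemma finV: "finite V" using nice by (simp add: nice_def simple_graph_def)
lemma edge: "e \<in> E \<Longrightarrow> e \<subseteq> V \<and> card e = 2" using nice by (simp add: nice_def simple_graph_def)
lemma JV: "J \<subseteq> V" using good by (simp add: good_subset_def)
lemma finE: "finite E"
proof -
  have "E \<subseteq> Pow V" using edge by auto
  thus ?thesis using finV by (meson finite_Pow_iff finite_subset)
qed

lemma N_prop: "i \<notin> J \<Longrightarrow> j \<in> N i \<Longrightarrow> j \<in> J \<and> j \<noteq> i \<and> {i,j} \<in> E"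
proof -
  assume i: "i \<notin> J" and j: "j \<in> N i"
  hence e: "{i,j} \<in> E" "card ({i,j} \<inter> J) = 1" by (auto simp: NJ3_def EJ3_def)
  have "j \<in> J"
  proof (rule ccontr)
    assume "j \<notin> J" hence "{i,j} \<inter> J = {}" using i by auto
    thus False using e by simp
  qed
  thus ?thesis using i e by auto
qed

lemma N_intro: "i \<notin> J \<Longrightarrow> j \<in> J \<Longrightarrow> {i,j} \<in> E \<Longrightarrow> j \<in> N i"
proof -
  assume a: "i \<notin> J" "j \<in> J" "{i,j} \<in> E"
  hence "{i,j} \<inter> J = {j}" by auto
  thus ?thesis using a by (simp add: NJ3_def EJ3_def)
qed

lemma N_sub: "i \<notin> J \<Longrightarrow> N i \<subseteq> V"
  using N_prop edge by blast

lemma N_fin: "i \<notin> J \<Longrightarrow> finite (N i)"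
  using N_sub finV finite_subset by blast

lemma nbl: "i \<notin> J \<Longrightarrow> set (nbl i) = N i \<and> distinct (nbl i)"
  unfolding nbl_def by (rule someI_ex) (use N_fin finite_distinct_list in blast)

lemma kk_card: "i \<notin> J \<Longrightarrow> kk i = card (N i)"
  using nbl distinct_card kk_def by metis

lemma cnt_C3: "size (filter_mset P C3) = (\<Sum>i\<in>V-J. cm i * card {t. t < kk i \<and> P (cyc i t)})"
proof -
  have fin: "finite (V - J)" using finV by simp
  have "size (filter_mset P C3) = (\<Sum>i\<in>V-J. size (filter_mset P (Q i)))"
    unfolding C3_def filter_sum[OF fin] size_sum[OF fin] ..
  also have "\<dots> = (\<Sum>i\<in>V-J. cm i * card {t. t < kk i \<and> P (cyc i t)})"
    by (simp only: Q_def filter_repeat size_repeat_mset size_filter_map)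
  finally show ?thesis .
qed

lemma mem_C3: "p \<in># C3 \<Longrightarrow> \<exists>i\<in>V-J. \<exists>t<kk i. 2 \<le> kk i \<and> p = cyc i t"
proof -
  assume "p \<in># C3"
  hence "p \<in> (\<Union>i\<in>V-J. set_mset (Q i))" using set_mset_sum[of "V-J" Q] finV unfolding C3_def by simp
  then obtain i where i: "i \<in> V - J" "p \<in># Q i" by blast
  hence "cm i \<noteq> 0" "p \<in># mset (map (cyc i) [0..<kk i])" unfolding Q_def using in_repeat by metis+
  moreover have "2 \<le> kk i" using \<open>cm i \<noteq> 0\<close> by (auto simp: cm_def split: if_splits)
  moreover obtain t where "t < kk i" "p = cyc i t" using \<open>p \<in># mset (map (cyc i) [0..<kk i])\<close> by auto
  ultimately show ?thesis using i by blast
qed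

lemma cyc_ends: assumes "i \<in> V - J" "t < kk i" "2 \<le> kk i"
  shows "nbl i ! t \<in> N i" "nbl i ! nx (kk i) t \<in> N i" "nbl i ! t \<noteq> nbl i ! nx (kk i) t"
proof -
  have n: "set (nbl i) = N i" "distinct (nbl i)" using nbl assms by auto
  show "nbl i ! t \<in> N i" using n assms by (auto simp: kk_def)
  show "nbl i ! nx (kk i) t \<in> N i" using n assms nx_lt by (auto simp: kk_def)
  have "nx (kk i) t < length (nbl i)" "nx (kk i) t \<noteq> t" "t < length (nbl i)"
    using assms nx_lt[of t "kk i"] nx_ne[of t "kk i"] by (auto simp: kk_def)
  thus "nbl i ! t \<noteq> nbl i ! nx (kk i) t" using n(2) by (simp add: nth_eq_iff_index_eq)
qed

lemma cyc_path: assumes "i \<in> V - J" "t < kk i" "2 \<le> kk i"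
  shows "is_path V E (cyc i t) \<and> hd (cyc i t) \<noteq> last (cyc i t) \<and> hd (cyc i t) \<in> J
     \<and> last (cyc i t) \<in> J \<and> walk_len (cyc i t) = 2"
proof -
  define a where "a = nbl i ! t"
  define b where "b = nbl i ! nx (kk i) t"
  have ab: "a \<in> N i" "b \<in> N i" "a \<noteq> b" using cyc_ends[OF assms] a_def b_def by auto
  have i: "i \<notin> J" "i \<in> V" using assms by auto
  have pa: "a \<in> J" "a \<noteq> i" "{i,a} \<in> E" using N_prop[OF i(1) ab(1)] by auto
  have pb: "b \<in> J" "b \<noteq> i" "{i,b} \<in> E" using N_prop[OF i(1) ab(2)] by auto
  have V: "a \<in> V" "b \<in> V" using pa pb JV by auto
  have c: "cyc i t = [a, i, b]" by (simp add: cyc_def a_def b_def)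
  have w: "\<forall>n. Suc n < length [a,i,b] \<longrightarrow> {[a,i,b] ! n, [a,i,b] ! Suc n} \<in> E"
  proof (intro allI impI)
    fix n assume "Suc n < length [a,i,b]"
    hence "n = 0 \<or> n = 1" by auto
    thus "{[a,i,b] ! n, [a,i,b] ! Suc n} \<in> E" using pa pb by (auto simp: insert_commute)
  qed
  show ?thesis unfolding c is_path_def is_walk_def walk_len_def
    using w V i pa pb ab by auto
qed

lemma deg_J: assumes j: "j \<in> J" shows "deg (EJ3 E J) j = card {i\<in>V-J. j \<in> N i}"
proof -
  let ?A = "{i\<in>V-J. j \<in> N i}"
  have eq: "{e\<in>EJ3 E J. j \<in> e} = (\<lambda>i. {i,j}) ` ?A"
  proof
    show "(\<lambda>i. {i,j}) ` ?A \<subseteq> {e\<in>EJ3 E J. j \<in> e}" by (auto simp: NJ3_def)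
  next
    show "{e\<in>EJ3 E J. j \<in> e} \<subseteq> (\<lambda>i. {i,j}) ` ?A"
    proof
      fix e assume e: "e \<in> {e\<in>EJ3 E J. j \<in> e}"
      hence eE: "e \<in> E" "card (e \<inter> J) = 1" "j \<in> e" by (auto simp: EJ3_def)
      then obtain x y where xy: "e = {x,y}" "x \<noteq> y" using edge card_2_iff by metis
      obtain i where i: "e = {i,j}" "i \<noteq> j" using xy eE(3) by (metis insert_commute insertE singletonD)
      have "i \<notin> J"
      proof
        assume "i \<in> J" hence "e \<inter> J = e" using i j by auto
        thus False using eE edge by simp
      qed
      moreover have "i \<in> V" using edge eE(1) i by auto
      moreover have "j \<in> N i" using e i by (auto simp: NJ3_def)
      ultimately show "e \<in> (\<lambda>i. {i,j}) ` ?A" using i by auto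
    qed
  qed
  have "inj_on (\<lambda>i. {i,j}) ?A"
    using j by (auto simp: inj_on_def doubleton_eq_iff)
  thus ?thesis unfolding deg_def eq by (simp add: card_image)
qed

lemma deg_out: assumes i: "i \<in> V - J" shows "deg (EJ3 E J) i = card (N i)"
proof -
  have eq: "{e\<in>EJ3 E J. i \<in> e} = (\<lambda>j. {i,j}) ` N i"
  proof
    show "(\<lambda>j. {i,j}) ` N i \<subseteq> {e\<in>EJ3 E J. i \<in> e}" by (auto simp: NJ3_def)
  next
    show "{e\<in>EJ3 E J. i \<in> e} \<subseteq> (\<lambda>j. {i,j}) ` N i"
    proof
      fix e assume e: "e \<in> {e\<in>EJ3 E J. i \<in> e}"
      hence eE: "e \<in> E" "i \<in> e" by (auto simp: EJ3_def)
      then obtain x y where xy: "e = {x,y}" "x \<noteq> y" using edge card_2_iff by metis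
      obtain j where "e = {i,j}" using xy eE(2) by (metis insert_commute insertE singletonD)
      thus "e \<in> (\<lambda>j. {i,j}) ` N i" using e by (auto simp: NJ3_def)
    qed
  qed
  have "inj_on (\<lambda>j. {i,j}) (N i)"
    using i N_prop by (auto simp: inj_on_def doubleton_eq_iff)
  thus ?thesis unfolding deg_def eq by (simp add: card_image)
qed

lemma dC_eq: "dC C3 j = (\<Sum>i\<in>V-J. cm i * card {t. t < kk i \<and> (j = hd (cyc i t) \<or> j = last (cyc i t))})"
  unfolding dC_def by (rule cnt_C3)

lemma ends_ge: assumes "i \<in> V - J" "j \<in> N i"
  shows "2 * cm i \<le> cm i * card {t. t < kk i \<and> (j = hd (cyc i t) \<or> j = last (cyc i t))}"
proof (cases "2 \<le> kk i")
  case True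
  have n: "set (nbl i) = N i" "distinct (nbl i)" using nbl assms by auto
  have "{t. t < kk i \<and> (j = hd (cyc i t) \<or> j = last (cyc i t))}
      = {t. t < length (nbl i) \<and> (nbl i ! t = j \<or> nbl i ! nx (length (nbl i)) t = j)}"
    by (auto simp: cyc_def kk_def)
  moreover have "2 \<le> card {t. t < length (nbl i) \<and> (nbl i ! t = j \<or> nbl i ! nx (length (nbl i)) t = j)}"
    using cnt_ge[of "nbl i" j] n assms True by (simp add: kk_def)
  ultimately show ?thesis by (simp add: mult.commute)
next
  case False thus ?thesis by (simp add: cm_def)
qed

lemma card_ge2: assumes "finite A" "j \<in> A" "A \<noteq> {j}" shows "2 \<le> card A"
proof -
  obtain j' where "j' \<in> A" "j' \<noteq> j" using assms by blast
  hence "{j,j'} \<subseteq> A" using assms by auto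
  hence "card {j,j'} \<le> card A" using assms card_mono by blast
  thus ?thesis using \<open>j' \<noteq> j\<close> by simp
qed

lemma dC_bound: assumes j: "j \<in> J" shows "2 * deg (EJ3 E J) j \<le> dC C3 j"
proof -
  define A where "A = {i\<in>V-J. j \<in> N i}"
  have finA: "finite A" using finV by (simp add: A_def)
  have d: "deg (EJ3 E J) j = card A" using deg_J[OF j] A_def by simp
  have "(\<Sum>i\<in>A. 2 * cm i) \<le> (\<Sum>i\<in>A. cm i * card {t. t < kk i \<and> (j = hd (cyc i t) \<or> j = last (cyc i t))})"
    by (rule sum_mono) (use ends_ge A_def in auto)
  also have "\<dots> \<le> dC C3 j" unfolding dC_eq
    by (rule sum_mono2) (use finV A_def in auto)
  finally have le: "2 * (\<Sum>i\<in>A. cm i) \<le> dC C3 j" by (simp add: sum_distrib_left)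
  have cm1: "1 \<le> cm i" if "i \<in> A" "\<not> private_nb V E J i j" for i
  proof -
    have i: "i \<in> V - J" "j \<in> N i" using that A_def by auto
    have "N i \<noteq> {j}" using that i by (auto simp: private_nb_def)
    hence "2 \<le> kk i" using card_ge2[of "N i" j] N_fin kk_card i by auto
    thus ?thesis by (simp add: cm_def)
  qed
  have "card A \<le> (\<Sum>i\<in>A. cm i)"
  proof (cases "\<exists>p. private_nb V E J p j")
    case False
    hence "(\<Sum>i\<in>A. 1) \<le> (\<Sum>i\<in>A. cm i)" by (intro sum_mono) (use cm1 in auto)
    thus ?thesis by simp
  next
    case True
    then obtain p where p: "private_nb V E J p j" by blast
    have pV: "p \<in> V - J" "N p = {j}" using p by (auto simp: private_nb_def)
    hence pA: "p \<in> A" by (simp add: A_def)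
    have J3: "card {i. private_nb V E J i j} \<le> 1" using good j by (simp add: good_subset_def)
    have finP: "finite {i. private_nb V E J i j}"
      by (rule finite_subset[OF _ finV]) (auto simp: private_nb_def)
    have np: "\<not> private_nb V E J i j" if "i \<noteq> p" for i
    proof
      assume "private_nb V E J i j"
      hence "{i,p} \<subseteq> {i. private_nb V E J i j}" using p by auto
      hence "card {i,p} \<le> 1" using J3 finP card_mono order_trans by metis
      thus False using that by simp
    qed
    have cm2: "cm i = 2" if "i \<in> A - {p}" for i
    proof -
      have i: "i \<in> V - J" "j \<in> N i" "i \<noteq> p" using that A_def by auto
      have "N i \<noteq> {j}" using np[OF i(3)] i by (auto simp: private_nb_def)
      hence k2: "2 \<le> kk i" using card_ge2[of "N i" j] N_fin kk_card i by auto
      have "\<not> (kk i = 2 \<and> (\<exists>e\<in>EJ4 E J. ie e = i))"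
      proof
        assume "kk i = 2 \<and> (\<exists>e\<in>EJ4 E J. ie e = i)"
        then obtain e where e: "e \<in> EJ4 E J" "ie e = i" "kk i = 2" by blast
        have "e \<subseteq> N i" "card e = 2" using ie_prop[OF e(1)] e edge by (auto simp: EJ4_def)
        moreover have "card (N i) = 2" using e kk_card i by auto
        ultimately have "e = N i" using card_subset_eq[of "N i" e] N_fin[of i] i by auto
        hence "j \<in> e" using i by simp
        thus False using ie_prop[OF e(1)] p by blast
      qed
      thus ?thesis using k2 by (simp add: cm_def)
    qed
    have "deg (EJ3 E J) j \<noteq> 1"
    proof -
      have "{p,j} \<in> EJ3 E J" using pV by (auto simp: NJ3_def)
      hence "\<not> isolated_edge (EJ3 E J) {p,j}" using good by (simp add: good_subset_def)
      moreover have "deg (EJ3 E J) p = 1" using deg_out[OF pV(1)] pV by simp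
      ultimately show ?thesis using \<open>{p,j} \<in> EJ3 E J\<close> by (auto simp: isolated_edge_def)
    qed
    hence cA: "2 \<le> card A" using d pA finA by (metis One_nat_def card_0_eq empty_iff less_2_cases not_less)
    have "(\<Sum>i\<in>A. cm i) = cm p + (\<Sum>i\<in>A-{p}. cm i)" using finA pA by (simp add: sum.remove)
    also have "(\<Sum>i\<in>A-{p}. cm i) = (\<Sum>i\<in>A-{p}. 2)" using cm2 by simp
    finally have "(\<Sum>i\<in>A. cm i) \<ge> 2 * (card A - 1)" using finA pA by simp
    thus ?thesis using cA by linarith
  qed
  thus ?thesis using le d by linarith
qed

lemma parity: assumes "j \<noteq> j'"
  shows "even (size (filter_mset (\<lambda>p. joins p j j' \<and> even (walk_len p)) C3))"
    "even (size (filter_mset (\<lambda>p. joins p j j' \<and> odd (walk_len p)) C3))"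
proof -
  have wl: "walk_len (cyc i t) = 2" for i t by (simp add: cyc_def walk_len_def)
  show "even (size (filter_mset (\<lambda>p. joins p j j' \<and> odd (walk_len p)) C3))"
    unfolding cnt_C3 wl by simp
  show "even (size (filter_mset (\<lambda>p. joins p j j' \<and> even (walk_len p)) C3))"
    unfolding cnt_C3 wl
  proof (intro dvd_sum ballI)
    fix i assume i: "i \<in> V - J"
    show "even (cm i * card {t. t < kk i \<and> joins (cyc i t) j j' \<and> even (2::nat)})"
    proof (cases "cm i = 1")
      case False
      have "cm i \<in> {0,1,2}" by (simp add: cm_def)
      hence "cm i = 0 \<or> cm i = 2" using False by auto
      thus ?thesis by auto
    next
      case True
      hence k: "kk i = 2" by (auto simp: cm_def split: if_splits)
      let ?x0 = "nbl i ! 0" and ?x1 = "nbl i ! 1"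
      have "{t. t < kk i \<and> joins (cyc i t) j j' \<and> even (2::nat)}
          = (if {?x0, ?x1} = {j, j'} then {0,1} else {})"
        using k by (auto simp: cyc_def joins_def nx_def insert_commute less_2_cases_iff)
      thus ?thesis by simp
    qed
  qed
qed

end

context LG begin

definition vv where "vv e = (SOME v. v \<in> e)"
definition jj where "jj e = (SOME j. j \<in> J \<and> {vv e, j} \<in> E \<and>
   (\<forall>e'\<in>EJ4 E J. ie e' = vv e \<longrightarrow> 3 \<le> card (N (vv e)) \<longrightarrow> j \<notin> e'))"
definition C2 where "C2 e = {vv e, jj e}"
definition fa where "fa e = (SOME a. a \<in> e)"
definition fb where "fb e = (SOME b. b \<in> e \<and> b \<noteq> fa e)"
definition C4 where "C4 e = [fa e, fb e, ie e, fa e]"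

lemma vv: assumes "e \<in> EJ2 E J" shows "vv e \<in> e" "vv e \<in> V - J"
proof -
  have e: "e \<in> E" "e \<inter> J = {}" using assms by (auto simp: EJ2_def edges_minus_def)
  hence "e \<noteq> {}" using edge by fastforce
  thus v: "vv e \<in> e" unfolding vv_def by (simp add: some_in_eq)
  thus "vv e \<in> V - J" using e edge by auto
qed

lemma jj: assumes "e \<in> EJ2 E J"
  shows "jj e \<in> J \<and> {vv e, jj e} \<in> E \<and>
   (\<forall>e'\<in>EJ4 E J. ie e' = vv e \<longrightarrow> 3 \<le> card (N (vv e)) \<longrightarrow> jj e \<notin> e')"
  unfolding jj_def
proof (rule someI_ex)
  let ?v = "vv e"
  have v: "?v \<in> e" "?v \<in> V - J" using vv assms by auto
  have J5: "\<forall>e\<in>EJ2 E J. \<forall>v\<in>e. \<exists>j\<in>J. {v, j} \<in> E" using good by (simp add: good_subset_def)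
  obtain j0 where j0: "j0 \<in> J" "{?v, j0} \<in> E" using J5 assms v by blast
  show "\<exists>j. j \<in> J \<and> {?v, j} \<in> E \<and> (\<forall>e'\<in>EJ4 E J. ie e' = ?v \<longrightarrow> 3 \<le> card (N ?v) \<longrightarrow> j \<notin> e')"
  proof (cases "\<exists>e'\<in>EJ4 E J. ie e' = ?v \<and> 3 \<le> card (N ?v)")
    case False thus ?thesis using j0 by blast
  next
    case True
    then obtain e' where e': "e' \<in> EJ4 E J" "ie e' = ?v" "3 \<le> card (N ?v)" by blast
    have "card e' = 2" using e' edge by (auto simp: EJ4_def)
    have fin: "finite (N ?v)" using N_fin v by auto
    have "N ?v - e' \<noteq> {}"
    proof
      assume "N ?v - e' = {}"
      hence "N ?v \<subseteq> e'" by auto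
      moreover have "finite e'" using \<open>card e' = 2\<close> card.infinite by fastforce
      ultimately have "card (N ?v) \<le> card e'" using card_mono by blast
      thus False using e' \<open>card e' = 2\<close> by simp
    qed
    then obtain j1 where j1: "j1 \<in> N ?v" "j1 \<notin> e'" by blast
    have "j1 \<in> J" "{?v, j1} \<in> E" using N_prop[of ?v j1] v j1 by auto
    moreover have "\<forall>e''\<in>EJ4 E J. ie e'' = ?v \<longrightarrow> j1 \<notin> e''"
      using ie_inj e' j1 by (metis inj_onD)
    ultimately show ?thesis by blast
  qed
qed

lemma C2_EJ3: assumes "e \<in> EJ2 E J" shows "C2 e \<in> EJ3 E J" "C2 e \<inter> e \<noteq> {}"
proof -
  have v: "vv e \<in> e" "vv e \<in> V - J" using vv assms by auto
  have j: "jj e \<in> J" "{vv e, jj e} \<in> E" using jj assms by auto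
  have "{vv e, jj e} \<inter> J = {jj e}" using v j by auto
  thus "C2 e \<in> EJ3 E J" using j by (simp add: C2_def EJ3_def)
  show "C2 e \<inter> e \<noteq> {}" using v by (auto simp: C2_def)
qed

lemma fab: assumes "e \<in> EJ4 E J" shows "fa e \<in> e" "fb e \<in> e" "fa e \<noteq> fb e" "e = {fa e, fb e}"
proof -
  have "card e = 2" using assms edge by (auto simp: EJ4_def)
  then obtain x y where xy: "e = {x,y}" "x \<noteq> y" using card_2_iff by metis
  show a: "fa e \<in> e" unfolding fa_def using xy by (metis insertI1 someI_ex)
  have "\<exists>b. b \<in> e \<and> b \<noteq> fa e" using xy a by auto
  thus b: "fb e \<in> e" "fa e \<noteq> fb e" unfolding fb_def by (metis (mono_tags, lifting) someI_ex)+
  show "e = {fa e, fb e}" using a b xy by auto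
qed

lemma C4_ok: assumes "e \<in> EJ4 E J" shows "odd_closed_walk V E (C4 e) \<and> e \<in> walk_edges (C4 e)"
proof -
  note f = fab[OF assms]
  have i: "ie e \<in> V - J" "fa e \<in> N (ie e)" "fb e \<in> N (ie e)" using ie_prop[OF assms] f by auto
  have E1: "{ie e, fa e} \<in> E" "{ie e, fb e} \<in> E" using i N_prop by auto
  have E0: "{fa e, fb e} \<in> E" using assms f by (auto simp: EJ4_def)
  have V: "fa e \<in> V" "fb e \<in> V" using E0 edge by auto
  have w: "\<forall>n. Suc n < length (C4 e) \<longrightarrow> {C4 e ! n, C4 e ! Suc n} \<in> E"
  proof (intro allI impI)
    fix n assume "Suc n < length (C4 e)"
    hence "n = 0 \<or> n = 1 \<or> n = 2" by (auto simp: C4_def)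
    thus "{C4 e ! n, C4 e ! Suc n} \<in> E" using E0 E1 by (auto simp: C4_def insert_commute)
  qed
  show ?thesis unfolding odd_closed_walk_def is_walk_def walk_len_def
    using w V i f by (auto simp: C4_def we4)
qed

lemma c4mem: assumes "e \<in> EJ4 E J" "f \<in> walk_edges (C4 e)"
  shows "f = e \<or> (\<exists>x\<in>e. f = {x, ie e})"
  using assms fab[OF assms(1)] by (auto simp: C4_def we4 insert_commute)

lemma finEJ: "finite (EJ2 E J)" "finite (EJ4 E J)"
  using finE by (auto simp: EJ2_def EJ4_def edges_minus_def)

lemma C2_inter: assumes "e \<in> EJ2 E J" shows "C2 e \<inter> J \<noteq> {}" "\<not> C2 e \<subseteq> J"
  using vv[OF assms] jj[OF assms] by (auto simp: C2_def)

lemma c2_le: "card {e\<in>EJ2 E J. C2 e = f} \<le> 1"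
proof -
  have "\<forall>e1\<in>{e\<in>EJ2 E J. C2 e = f}. \<forall>e2\<in>{e\<in>EJ2 E J. C2 e = f}. e1 = e2"
  proof (intro ballI)
    fix e1 e2 assume a: "e1 \<in> {e\<in>EJ2 E J. C2 e = f}" "e2 \<in> {e\<in>EJ2 E J. C2 e = f}"
    have e: "e1 \<in> EJ2 E J" "e2 \<in> EJ2 E J" "C2 e1 = C2 e2" using a by simp_all
    have v: "vv e1 \<in> e1" "vv e1 \<notin> J" "vv e2 \<in> e2" "vv e2 \<notin> J"
      using vv[OF e(1)] vv[OF e(2)] by simp_all
    have j: "jj e1 \<in> J" "jj e2 \<in> J" using jj[OF e(1)] jj[OF e(2)] by simp_all
    have "{vv e1, jj e1} = {vv e2, jj e2}" using e(3) by (simp add: C2_def)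
    hence veq: "vv e1 = vv e2" using v(2) j(2) by (metis doubleton_eq_iff)
    let ?F = "edges_minus E J"
    have iso: "isolated_edge ?F e1" "e1 \<in> ?F" "e2 \<in> ?F" using e(1,2) by (simp_all add: EJ2_def)
    hence "deg ?F (vv e1) = 1" using v(1) unfolding isolated_edge_def by blast
    then obtain x where x: "{e\<in>?F. vv e1 \<in> e} = {x}" unfolding deg_def by (rule card_1_singletonE)
    have m1: "e1 \<in> {e\<in>?F. vv e1 \<in> e}" using iso(2) v(1) by simp
    have m2: "e2 \<in> {e\<in>?F. vv e1 \<in> e}" using iso(3) v(3) veq by simp
    have "e1 \<in> {x}" using m1 unfolding x .
    moreover have "e2 \<in> {x}" using m2 unfolding x .
    ultimately show "e1 = e2" by simp
  qed
  moreover have "finite {e\<in>EJ2 E J. C2 e = f}" using finEJ by simp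
  ultimately show ?thesis using card_le_Suc0_iff_eq[of "{e\<in>EJ2 E J. C2 e = f}"] by simp
qed

lemma c4_le: "card {e\<in>EJ4 E J. f \<in> walk_edges (C4 e)} \<le> 1"
proof -
  have "\<forall>e1\<in>{e\<in>EJ4 E J. f \<in> walk_edges (C4 e)}. \<forall>e2\<in>{e\<in>EJ4 E J. f \<in> walk_edges (C4 e)}. e1 = e2"
  proof (intro ballI)
    fix e1 e2 assume a: "e1 \<in> {e\<in>EJ4 E J. f \<in> walk_edges (C4 e)}" "e2 \<in> {e\<in>EJ4 E J. f \<in> walk_edges (C4 e)}"
    have e: "e1 \<in> EJ4 E J" "e2 \<in> EJ4 E J" "f \<in> walk_edges (C4 e1)" "f \<in> walk_edges (C4 e2)"
      using a by simp_all
    have m1: "f = e1 \<or> (\<exists>x\<in>e1. f = {x, ie e1})" using c4mem[OF e(1) e(3)] .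
    have m2: "f = e2 \<or> (\<exists>x\<in>e2. f = {x, ie e2})" using c4mem[OF e(2) e(4)] .
    have J: "e1 \<subseteq> J" "e2 \<subseteq> J" using e(1,2) by (simp_all add: EJ4_def)
    have I: "ie e1 \<notin> J" "ie e2 \<notin> J" using ie_prop[OF e(1)] ie_prop[OF e(2)] by simp_all
    show "e1 = e2"
    proof (cases "f = e1")
      case True
      hence fJ: "f \<subseteq> J" using J by simp
      have "\<not> (\<exists>x\<in>e2. f = {x, ie e2})" using fJ I by blast
      thus ?thesis using m2 True by simp
    next
      case False
      then obtain x1 where x1: "x1 \<in> e1" "f = {x1, ie e1}" using m1 by blast
      have nfJ: "\<not> f \<subseteq> J" using x1 I by simp
      have "f \<noteq> e2" using nfJ J by blast
      then obtain x2 where x2: "x2 \<in> e2" "f = {x2, ie e2}" using m2 by blast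
      have "ie e2 \<in> f" using x2(2) by simp
      hence "ie e2 \<in> {x1, ie e1}" using x1(2) by simp
      moreover have "ie e2 \<noteq> x1" using x1(1) J(1) I(2) by blast
      ultimately have "ie e1 = ie e2" by simp
      thus ?thesis using ie_inj e(1,2) by (meson inj_onD)
    qed
  qed
  moreover have "finite {e\<in>EJ4 E J. f \<in> walk_edges (C4 e)}" using finEJ by simp
  ultimately show ?thesis using card_le_Suc0_iff_eq[of "{e\<in>EJ4 E J. f \<in> walk_edges (C4 e)}"] by simp
qed

lemma c4_zero: assumes "f \<inter> J = {}" shows "card {e\<in>EJ4 E J. f \<in> walk_edges (C4 e)} = 0"
proof -
  have S: "{e\<in>EJ4 E J. f \<in> walk_edges (C4 e)} = {}"
  proof (rule ccontr)
    assume "{e\<in>EJ4 E J. f \<in> walk_edges (C4 e)} \<noteq> {}"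
    then obtain e where e: "e \<in> EJ4 E J" "f \<in> walk_edges (C4 e)" by blast
    have eJ: "e \<subseteq> J" using e(1) by (simp add: EJ4_def)
    have fa: "fa e \<in> e" using fab[OF e(1)] by simp
    have m: "f = e \<or> (\<exists>x\<in>e. f = {x, ie e})" using c4mem[OF e] .
    show False
    proof (cases "f = e")
      case True thus False using fa eJ assms by blast
    next
      case False
      then obtain x where "x \<in> e" "f = {x, ie e}" using m by blast
      thus False using eJ assms by blast
    qed
  qed
  show ?thesis unfolding S by simp
qed

lemma cyc_mem: assumes "i \<in> V - J" "t < kk i" "f \<in> walk_edges (cyc i t)"
  shows "f = {nbl i ! t, i} \<or> f = {i, nbl i ! nx (kk i) t}" "\<exists>x\<in>J. f = {x, i}"
proof -
  show f: "f = {nbl i ! t, i} \<or> f = {i, nbl i ! nx (kk i) t}"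
    using assms(3) by (simp add: cyc_def we3)
  have iJ: "i \<notin> J" using assms(1) by simp
  have n: "set (nbl i) = N i" using nbl iJ by simp
  have t1: "t < length (nbl i)" "nx (kk i) t < length (nbl i)"
    using assms(2) nx_lt[of t "kk i"] by (simp_all add: kk_def)
  have "nbl i ! t \<in> N i" "nbl i ! nx (kk i) t \<in> N i"
    using n t1 nth_mem by metis+
  hence J: "nbl i ! t \<in> J" "nbl i ! nx (kk i) t \<in> J" using N_prop[OF iJ] by simp_all
  show "\<exists>x\<in>J. f = {x, i}"
  proof (cases "f = {nbl i ! t, i}")
    case True thus ?thesis using J(1) by blast
  next
    case False
    hence "f = {nbl i ! nx (kk i) t, i}" using f by (simp add: insert_commute)
    thus ?thesis using J(2) by blast
  qed
qed

lemma c3_zero: assumes "\<not> (\<exists>x\<in>J. \<exists>i\<in>V-J. f = {x,i})"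
  shows "size (filter_mset (\<lambda>p. f \<in> walk_edges p) C3) = 0"
proof -
  have "\<forall>i\<in>V-J. cm i * card {t. t < kk i \<and> f \<in> walk_edges (cyc i t)} = 0"
  proof
    fix i assume i: "i \<in> V - J"
    have S: "{t. t < kk i \<and> f \<in> walk_edges (cyc i t)} = {}"
    proof (rule ccontr)
      assume "{t. t < kk i \<and> f \<in> walk_edges (cyc i t)} \<noteq> {}"
      then obtain t where "t < kk i" "f \<in> walk_edges (cyc i t)" by blast
      then obtain x where "x \<in> J" "f = {x, i}" using cyc_mem(2)[OF i] by blast
      thus False using assms i by blast
    qed
    show "cm i * card {t. t < kk i \<and> f \<in> walk_edges (cyc i t)} = 0" unfolding S by simp
  qed
  thus ?thesis unfolding cnt_C3 by (rule sum.neutral)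
qed

lemma c3_le: assumes "i0 \<in> V - J" "j \<in> J" "f = {i0, j}"
  shows "size (filter_mset (\<lambda>p. f \<in> walk_edges p) C3) \<le> 2 * cm i0"
proof -
  let ?g = "\<lambda>i. cm i * card {t. t < kk i \<and> f \<in> walk_edges (cyc i t)}"
  have z: "\<forall>i\<in>V-J. i \<noteq> i0 \<longrightarrow> ?g i = 0"
  proof (intro ballI impI)
    fix i assume i: "i \<in> V - J" "i \<noteq> i0"
    have S: "{t. t < kk i \<and> f \<in> walk_edges (cyc i t)} = {}"
    proof (rule ccontr)
      assume "{t. t < kk i \<and> f \<in> walk_edges (cyc i t)} \<noteq> {}"
      then obtain t where "t < kk i" "f \<in> walk_edges (cyc i t)" by blast
      then obtain x where "x \<in> J" "f = {x, i}" using cyc_mem(2) i by blast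
      hence "i \<in> f" by simp
      hence "i = i0 \<or> i = j" using assms(3) by simp
      thus False using i assms(2) by blast
    qed
    show "?g i = 0" unfolding S by simp
  qed
  have "size (filter_mset (\<lambda>p. f \<in> walk_edges p) C3) = ?g i0"
    unfolding cnt_C3 by (rule sum_single_nz[OF _ assms(1) z]) (use finV in simp)
  also have "\<dots> \<le> cm i0 * 2"
  proof -
    have n: "distinct (nbl i0)" using nbl assms(1) by simp
    have i0J: "i0 \<noteq> j" using assms(1,2) by blast
    have sub: "{t. t < kk i0 \<and> f \<in> walk_edges (cyc i0 t)} \<subseteq>
       {t. t < length (nbl i0) \<and> (nbl i0 ! t = j \<or> nbl i0 ! nx (length (nbl i0)) t = j)}"
    proof
      fix t assume t: "t \<in> {t. t < kk i0 \<and> f \<in> walk_edges (cyc i0 t)}"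
      hence tk: "t < kk i0" "f \<in> walk_edges (cyc i0 t)" by simp_all
      hence "f = {nbl i0 ! t, i0} \<or> f = {i0, nbl i0 ! nx (kk i0) t}" using cyc_mem(1) assms(1) by blast
      hence "nbl i0 ! t = j \<or> nbl i0 ! nx (kk i0) t = j" using assms(3) i0J by (auto simp: doubleton_eq_iff)
      thus "t \<in> {t. t < length (nbl i0) \<and> (nbl i0 ! t = j \<or> nbl i0 ! nx (length (nbl i0)) t = j)}"
        using tk(1) by (simp add: kk_def)
    qed
    have fin: "finite {t. t < length (nbl i0) \<and> (nbl i0 ! t = j \<or> nbl i0 ! nx (length (nbl i0)) t = j)}" by simp
    have "card {t. t < kk i0 \<and> f \<in> walk_edges (cyc i0 t)} \<le> 2"
      using card_mono[OF fin sub] cnt_le[OF n, of j] by linarith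
    thus ?thesis by simp
  qed
  finally show ?thesis by simp
qed

lemma K_zero: assumes "f \<inter> J = {}" shows "K_cov E J C2 C3 C4 f = 0"
proof -
  have S2: "{e\<in>EJ2 E J. C2 e = f} = {}"
  proof (rule ccontr)
    assume "{e\<in>EJ2 E J. C2 e = f} \<noteq> {}"
    then obtain e where e: "e \<in> EJ2 E J" "C2 e = f" by blast
    have "C2 e \<inter> J \<noteq> {}" using C2_inter(1)[OF e(1)] .
    thus False using e(2) assms by simp
  qed
  have "\<not> (\<exists>x\<in>J. \<exists>i\<in>V-J. f = {x,i})" using assms by blast
  hence c3: "size (filter_mset (\<lambda>p. f \<in> walk_edges p) C3) = 0" by (rule c3_zero)
  show ?thesis unfolding K_cov_def S2 c3 c4_zero[OF assms] by simp
qed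

lemma K_le: "K_cov E J C2 C3 C4 f \<le> 5"
proof -
  let ?c2 = "card {e\<in>EJ2 E J. C2 e = f}"
  let ?c3 = "size (filter_mset (\<lambda>p. f \<in> walk_edges p) C3)"
  let ?c4 = "card {e\<in>EJ4 E J. f \<in> walk_edges (C4 e)}"
  have K: "K_cov E J C2 C3 C4 f = ?c2 + ?c3 + ?c4" by (simp add: K_cov_def)
  have b2: "?c2 \<le> 1" by (rule c2_le)
  have b4: "?c4 \<le> 1" by (rule c4_le)
  show ?thesis
  proof (cases "\<exists>x\<in>J. \<exists>i\<in>V-J. f = {x,i}")
    case False
    hence "?c3 = 0" by (rule c3_zero)
    thus ?thesis using K b2 b4 by linarith
  next
    case True
    then obtain j i0 where ji: "j \<in> J" "i0 \<in> V - J" "f = {j, i0}" by blast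
    hence f': "f = {i0, j}" by (simp add: insert_commute)
    have b3: "?c3 \<le> 2 * cm i0" by (rule c3_le[OF ji(2) ji(1) f'])
    have "cm i0 \<le> 1 \<or> cm i0 = 2" by (simp add: cm_def)
    thus ?thesis
    proof
      assume "cm i0 \<le> 1" thus ?thesis using K b2 b3 b4 by linarith
    next
      assume cm2: "cm i0 = 2"
      show ?thesis
      proof (cases "?c4 = 0")
        case True thus ?thesis using K b2 b3 cm2 by linarith
      next
        case False
        hence "{e\<in>EJ4 E J. f \<in> walk_edges (C4 e)} \<noteq> {}" by (metis card.empty)
        then obtain e where e: "e \<in> EJ4 E J" "f \<in> walk_edges (C4 e)" by blast
        have eJ: "e \<subseteq> J" using e(1) by (simp add: EJ4_def)
        have i0J: "i0 \<notin> J" using ji(2) by simp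
        have "i0 \<in> f" using f' by simp
        hence "f \<noteq> e" using eJ i0J by blast
        then obtain x where x: "x \<in> e" "f = {x, ie e}" using c4mem[OF e] by blast
        have xJ: "x \<in> J" "ie e \<notin> J" using x(1) eJ ie_prop[OF e(1)] by auto
        have "ie e \<in> f" using x(2) by simp
        hence iej1: "ie e = i0" using f' xJ(2) ji(1) by blast
        have "x \<in> f" using x(2) by simp
        hence "x = j" using f' xJ(1) i0J by blast
        hence iej2: "j \<in> e" using x(1) by simp
        have k2: "kk i0 \<ge> 2"
        proof (rule ccontr)
          assume "\<not> kk i0 \<ge> 2" hence "cm i0 = 0" by (simp add: cm_def)
          thus False using cm2 by simp
        qed
        have k3: "kk i0 \<noteq> 2"
        proof
          assume "kk i0 = 2"
          moreover have "\<exists>e\<in>EJ4 E J. ie e = i0" using e(1) iej1 by blast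
          ultimately have "cm i0 = 1" by (simp add: cm_def)
          thus False using cm2 by simp
        qed
        have k: "3 \<le> card (N i0)" using k2 k3 kk_card[OF i0J] by linarith
        have S: "{e\<in>EJ2 E J. C2 e = f} = {}"
        proof (rule ccontr)
          assume "{e\<in>EJ2 E J. C2 e = f} \<noteq> {}"
          then obtain e2 where e2: "e2 \<in> EJ2 E J" "C2 e2 = f" by blast
          have v: "vv e2 \<notin> J" "jj e2 \<in> J" using vv[OF e2(1)] jj[OF e2(1)] by simp_all
          have eq: "{vv e2, jj e2} = {i0, j}" using e2(2) f' by (simp add: C2_def)
          have "vv e2 \<in> {i0, j}" using eq by blast
          hence vi: "vv e2 = i0" using v(1) ji(1) by blast
          have "jj e2 \<in> {i0, j}" using eq by blast
          hence jjj: "jj e2 = j" using v(2) i0J by blast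
          have "\<forall>e'\<in>EJ4 E J. ie e' = vv e2 \<longrightarrow> 3 \<le> card (N (vv e2)) \<longrightarrow> jj e2 \<notin> e'"
            using jj[OF e2(1)] by simp
          hence "j \<notin> e" using e(1) iej1 vi jjj k by simp
          thus False using iej2 by simp
        qed
        have "?c2 = 0" unfolding S by simp
        thus ?thesis using K b3 b4 cm2 by linarith
      qed
    qed
  qed
qed

end

theorem lemma4p2:
  fixes V :: "'a set" and E :: "'a set set" and J :: "'a set"
  assumes "nice V E"
    and "good_subset V E J"
  shows "\<exists>C2 C3 C4. J_covering V E J C2 C3 C4 \<and>
           (\<forall>f\<in>E - EJ1 E J. K_cov E J C2 C3 C4 f \<le> 5) \<and>
           (\<forall>f\<in>EJ1 E J. K_cov E J C2 C3 C4 f = 0)"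
proof -
  have J4: "\<exists>ie. inj_on ie (EJ4 E J) \<and> (\<forall>e\<in>EJ4 E J. ie e \<in> V - J \<and> e \<subseteq> NJ3 E J (ie e)
            \<and> (\<forall>j\<in>e. \<not> (\<exists>i. private_nb V E J i j)))"
    using assms(2) unfolding good_subset_def by (elim conjE) assumption
  then obtain ie where ie: "inj_on ie (EJ4 E J)" "\<forall>e\<in>EJ4 E J. ie e \<in> V - J \<and> e \<subseteq> NJ3 E J (ie e)
            \<and> (\<forall>j\<in>e. \<not> (\<exists>i. private_nb V E J i j))" by blast
  interpret LG V E J ie
  proof
    show "nice V E" "good_subset V E J" "inj_on ie (EJ4 E J)" using assms ie(1) by simp_all
    fix e assume "e \<in> EJ4 E J"
    thus "ie e \<in> V - J \<and> e \<subseteq> NJ3 E J (ie e) \<and> (\<forall>j\<in>e. \<not> (\<exists>i. private_nb V E J i j))"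
      using ie(2) by blast
  qed
  have cov2: "EJ2_covering E J C2" unfolding EJ2_covering_def using C2_EJ3 by blast
  have cov4: "EJ4_covering V E J C4" unfolding EJ4_covering_def using C4_ok by blast
  have P1: "\<forall>p\<in>#C3. is_path V E p \<and> hd p \<noteq> last p \<and> hd p \<in> J \<and> last p \<in> J"
  proof
    fix p assume "p \<in># C3"
    then obtain i t where "i \<in> V - J" "t < kk i" "2 \<le> kk i" "p = cyc i t" using mem_C3 by blast
    thus "is_path V E p \<and> hd p \<noteq> last p \<and> hd p \<in> J \<and> last p \<in> J" using cyc_path by blast
  qed
  have P2: "\<forall>j\<in>J. \<forall>j'\<in>J. j \<noteq> j' \<longrightarrow>
        even (size (filter_mset (\<lambda>p. joins p j j' \<and> even (walk_len p)) C3)) \<and>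
        even (size (filter_mset (\<lambda>p. joins p j j' \<and> odd (walk_len p)) C3))"
    using parity by blast
  have P3: "\<forall>j\<in>J. dC C3 j \<ge> 2 * deg (EJ3 E J) j" using dC_bound by blast
  have cov3: "EJ3_covering V E J C3" unfolding EJ3_covering_def using P1 P2 P3 by blast
  have "\<forall>f\<in>EJ1 E J. f \<inter> J = {}" by (auto simp: EJ1_def edges_minus_def)
  hence "\<forall>f\<in>EJ1 E J. K_cov E J C2 C3 C4 f = 0" using K_zero by blast
  moreover have "\<forall>f\<in>E - EJ1 E J. K_cov E J C2 C3 C4 f \<le> 5" using K_le by simp
  ultimately show ?thesis using cov2 cov3 cov4 unfolding J_covering_def by blast
qed

end
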